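(* Assume the setting in the context. Let $x_0\in\partial A$ and let $V\subset\mathcal M$ be open with $x_0\in V$. Then there exists an open set $W\subset\mathcal M$ with $x_0\in W$, $\overline W\subset V$, $v(\partial W)=0$, $\tilde v(\partial_{\partial A}(W\cap\partial A))=0$, and $\limsup_{r\downarrow0}r^{d-2}\kappa(\partial_{\partial A}(W\cap\partial A),r)<\infty$.
   Context: Let $2\le d\le m$. $\mathcal M\subset\mathbb R^m$ is a $d$-dimensional $C^2$ submanifold of $\mathbb R^m$, closed in $\mathbb R^m$, with induced Riemannian metric; ${\rm dist}$ geodetic distance, $B(x,r):=\{y\in\mathcal M:{\rm dist}(x,y)\le r\}$, $v$ Riemannian volume. For $D\subset\mathcal M$: $\overline D$ closure, $D^o:=\mathcal M\setminus\overline{\mathcal M\setminus D}$, $\partial D:=\overline D\setminus D^o$. $A\subset\mathcal M$ is a compact $C^2$ submanifold-with-boundary of $\mathcal M$ (for each $y\in\partial A$ there is a chart $(U,g)$ of $\mathcal M$ with $0\in U$, $g(0)=y$, $g(U\cap\mathbb H)=g(U)\cap A$, $\mathbb H=\mathbb R^{d-1}\times[0,\infty)$); $\tilde v$ is the Riemannian surface measure on $\partial A$. For $D\subset\mathcal M$, $\partial_{\partial A}(D\cap\partial A):=\overline{D\cap\partial A}\cap\overline{\partial A\setminus D}$. For $D\subset\mathcal M$ and $r>0$, the covering number $\kappa(D,r)$ is the minimal $m\in\mathbb N$ such that there exist $x_1,\dots,x_m\in D$ with $D\subset\bigcup_{i=1}^mB(x_i,r)$. *)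

theory Defs
  imports "HOL-Analysis.Analysis"
begin

definition C1_map :: "'x::euclidean_space set \<Rightarrow> ('x \<Rightarrow> 'y::real_normed_vector) \<Rightarrow> bool" where
  "C1_map U f \<longleftrightarrow> (\<exists>f'. (\<forall>x\<in>U. (f has_derivative blinfun_apply (f' x)) (at x)) \<and> continuous_on U f')"

definition C2_map :: "'x::euclidean_space set \<Rightarrow> ('x \<Rightarrow> 'y::real_normed_vector) \<Rightarrow> bool" where
  "C2_map U f \<longleftrightarrow> (\<exists>f' f''. (\<forall>x\<in>U. (f has_derivative blinfun_apply (f' x)) (at x))
      \<and> (\<forall>x\<in>U. (f' has_derivative blinfun_apply (f'' x)) (at x)) \<and> continuous_on U f'')"

definition regular_param :: "'a::euclidean_space set \<Rightarrow> (real^'n) set \<Rightarrow> (real^'n \<Rightarrow> 'a) \<Rightarrow> bool" where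
  "regular_param N U g \<longleftrightarrow> open U \<and> g ` U \<subseteq> N \<and> openin (top_of_set N) (g ` U)
     \<and> (\<exists>h. homeomorphism U (g ` U) g h) \<and> (\<forall>u\<in>U. inj (frechet_derivative g (at u)))"

definition chart1 :: "'a::euclidean_space set \<Rightarrow> (real^'n) set \<Rightarrow> (real^'n \<Rightarrow> 'a) \<Rightarrow> bool" where
  "chart1 N U g \<longleftrightarrow> regular_param N U g \<and> C1_map U g"

definition chart2 :: "'a::euclidean_space set \<Rightarrow> (real^'n) set \<Rightarrow> (real^'n \<Rightarrow> 'a) \<Rightarrow> bool" where
  "chart2 N U g \<longleftrightarrow> regular_param N U g \<and> C2_map U g"

text \<open>M is a C^2 submanifold of dimension CARD('n).\<close>
definition C2_submanifold :: "'n::finite itself \<Rightarrow> 'a::euclidean_space set \<Rightarrow> bool" where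
  "C2_submanifold _ M \<longleftrightarrow> (\<forall>y\<in>M. \<exists>(U::(real^'n) set) g. chart2 M U g \<and> y \<in> g ` U)"

definition mclosure :: "'a::topological_space set \<Rightarrow> 'a set \<Rightarrow> 'a set" where
  "mclosure M D = (top_of_set M) closure_of D"

definition minterior :: "'a::topological_space set \<Rightarrow> 'a set \<Rightarrow> 'a set" where
  "minterior M D = M - mclosure M (M - D)"

definition mbdry :: "'a::topological_space set \<Rightarrow> 'a set \<Rightarrow> 'a set" where
  "mbdry M D = mclosure M D - minterior M D"

definition C2_submfd_with_bdry :: "'n::finite itself \<Rightarrow> 'a::euclidean_space set \<Rightarrow> 'a set \<Rightarrow> bool" where
  "C2_submfd_with_bdry _ M A \<longleftrightarrow> A \<subseteq> M \<and>
     (\<forall>y\<in>mbdry M A. \<exists>(U::(real^'n) set) g k. chart2 M U g \<and> 0 \<in> U \<and> g 0 = y \<and>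
          g ` (U \<inter> {x. 0 \<le> x $ k}) = g ` U \<inter> A)"

text \<open>The relative boundary inside the boundary of A.\<close>
definition bdry_rel :: "'a::topological_space set \<Rightarrow> 'a set \<Rightarrow> 'a set \<Rightarrow> 'a set" where
  "bdry_rel M A D = mclosure M (D \<inter> mbdry M A) \<inter> mclosure M (mbdry M A - D)"

definition gram_jac :: "(real^'n \<Rightarrow> 'a::euclidean_space) \<Rightarrow> real^'n \<Rightarrow> real" where
  "gram_jac g u = sqrt (det (\<chi> i j. frechet_derivative g (at u) (axis i 1) \<bullet> frechet_derivative g (at u) (axis j 1)))"

text \<open>Riemannian volume of E w.r.t. the metric induced on the CARD('n)-dimensional
  submanifold N: supremum over finite disjoint families of pieces of E lying in chart images.\<close>
definition riem_vol :: "'n::finite itself \<Rightarrow> 'a::euclidean_space set \<Rightarrow> 'a set \<Rightarrow> ennreal" where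
  "riem_vol _ N E = Sup {(\<Sum>i<k. \<integral>\<^sup>+ u. indicator (U i \<inter> g i -` P i) u * ennreal (gram_jac (g i) u) \<partial>lborel) | k
        (U :: nat \<Rightarrow> (real^'n) set) g P.
        (\<forall>i<k. chart1 N (U i) (g i) \<and> P i \<subseteq> E \<inter> g i ` U i) \<and> disjoint_family_on P {..<k}}"

text \<open>Length of a piecewise C^1 path, geodesic distance (\<infinity> if no path), geodesic ball.\<close>
definition path_len :: "(real \<Rightarrow> 'a::euclidean_space) \<Rightarrow> real" where
  "path_len \<gamma> = integral {0..1} (\<lambda>t. norm (vector_derivative \<gamma> (at t)))"

definition gdist :: "'a::euclidean_space set \<Rightarrow> 'a \<Rightarrow> 'a \<Rightarrow> ereal" where
  "gdist M x y = Inf {ereal (path_len \<gamma>) | \<gamma>. valid_path \<gamma> \<and> path_image \<gamma> \<subseteq> M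
        \<and> pathstart \<gamma> = x \<and> pathfinish \<gamma> = y}"

definition gball :: "'a::euclidean_space set \<Rightarrow> 'a \<Rightarrow> real \<Rightarrow> 'a set" where
  "gball M x r = {y \<in> M. gdist M x y \<le> ereal r}"

text \<open>Covering number (\<infinity> if no finite covering exists).\<close>
definition covnum :: "'a::euclidean_space set \<Rightarrow> 'a set \<Rightarrow> real \<Rightarrow> enat" where
  "covnum M D r = Inf {enat (card X) | X. finite X \<and> X \<subseteq> D \<and> D \<subseteq> (\<Union>x\<in>X. gball M x r)}"

end

theory Submission
  imports Defs
begin


lemma C1_mapE:
  assumes "C1_map U g"
  obtains f' where "\<And>x. x\<in>U \<Longrightarrow> (g has_derivative blinfun_apply (f' x)) (at x)" "continuous_on U f'"
  using assms unfolding C1_map_def by blast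

lemma C2_imp_C1: "C2_map U g \<Longrightarrow> C1_map U g"
  unfolding C2_map_def C1_map_def
  by (meson continuous_at_imp_continuous_on has_derivative_continuous)

lemma chart2_imp_chart1: "chart2 N U g \<Longrightarrow> chart1 N U g"
  unfolding chart2_def chart1_def using C2_imp_C1 by blast

lemma chart_lower:
  fixes g :: "real^'m \<Rightarrow> 'a::euclidean_space"
  assumes "chart1 N U g" "u \<in> U"
  obtains d c where "d > 0" "c > 0" "ball u d \<subseteq> U"
    "\<And>v w. v \<in> ball u d \<Longrightarrow> w \<in> ball u d \<Longrightarrow> c * norm (v - w) \<le> norm (g v - g w)"
proof -
  have oU: "open U" and inj: "inj (frechet_derivative g (at u))" and C1: "C1_map U g"
    using assms unfolding chart1_def regular_param_def by auto
  obtain f' where der: "\<And>x. x\<in>U \<Longrightarrow> (g has_derivative blinfun_apply (f' x)) (at x)"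
    and cont: "continuous_on U f'" using C1_mapE[OF C1] by blast
  have "frechet_derivative g (at u) = blinfun_apply (f' u)"
    using frechet_derivative_at[OF der[OF assms(2)]] by simp
  with inj have "inj (blinfun_apply (f' u))" by simp
  then obtain B where B: "B > 0" "\<And>x. B * norm x \<le> norm (blinfun_apply (f' u) x)"
    using linear_inj_bounded_below_pos[of "blinfun_apply (f' u)"] by (metis blinfun.bounded_linear_right bounded_linear.linear)
  have "continuous (at u) f'" using cont oU assms(2) continuous_on_eq_continuous_at by blast
  then obtain d1 where d1: "d1 > 0" "\<And>v. dist v u < d1 \<Longrightarrow> dist (f' v) (f' u) < B/2"
    using B(1) unfolding continuous_at_eps_delta by (metis half_gt_zero)
  obtain d2 where d2: "d2 > 0" "ball u d2 \<subseteq> U" using oU assms(2) open_contains_ball by blast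
  define d where "d = min d1 d2"
  have dpos: "d > 0" using d1 d2 d_def by auto
  have bU: "ball u d \<subseteq> U" using d2 d_def by auto
  have lip: "norm ((g v - blinfun_apply (f' u) v) - (g w - blinfun_apply (f' u) w)) \<le> B/2 * norm (v - w)"
    if "v \<in> ball u d" "w \<in> ball u d" for v w
  proof (rule differentiable_bound[where f="\<lambda>x. g x - blinfun_apply (f' u) x" and S="ball u d"
        and f'="\<lambda>x. blinfun_apply (f' x - f' u)"])
    show "convex (ball u d)" by simp
    fix x assume x: "x \<in> ball u d"
    then have "x \<in> U" using bU by auto
    have "((\<lambda>x. g x - blinfun_apply (f' u) x) has_derivative (\<lambda>h. blinfun_apply (f' x) h - blinfun_apply (f' u) h)) (at x)"
      by (intro has_derivative_diff der[OF \<open>x\<in>U\<close>] bounded_linear_imp_has_derivative blinfun.bounded_linear_right)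
    then show "((\<lambda>x. g x - blinfun_apply (f' u) x) has_derivative blinfun_apply (f' x - f' u)) (at x within ball u d)"
    proof -
      have "blinfun_apply (f' x - f' u) = (\<lambda>h. blinfun_apply (f' x) h - blinfun_apply (f' u) h)"
        by (rule ext) (simp add: blinfun.diff_left)
      then show ?thesis using \<open>((\<lambda>x. g x - blinfun_apply (f' u) x) has_derivative _) (at x)\<close>
        by (simp add: has_derivative_at_withinI)
    qed
    have "dist x u < d1" using x d_def by (simp add: dist_commute)
    then show "onorm (blinfun_apply (f' x - f' u)) \<le> B/2"
      using d1(2)[of x] by (simp add: norm_blinfun.rep_eq[symmetric] dist_norm)
  qed (use that in auto)
  show thesis
  proof (rule that[OF dpos _ bU])
    show "B/2 > 0" using B by simp
    fix v w assume vw: "v \<in> ball u d" "w \<in> ball u d"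
    have e: "g v - g w = blinfun_apply (f' u) (v - w) + ((g v - blinfun_apply (f' u) v) - (g w - blinfun_apply (f' u) w))"
      by (simp add: blinfun.diff_right)
    have "B * norm (v - w) \<le> norm (blinfun_apply (f' u) (v - w))" by (rule B(2))
    also have "\<dots> \<le> norm (g v - g w) + norm ((g v - blinfun_apply (f' u) v) - (g w - blinfun_apply (f' u) w))"
      using e by (metis add_diff_cancel_right' norm_triangle_ineq4)
    finally show "B/2 * norm (v - w) \<le> norm (g v - g w)" using lip[OF vw] by simp
  qed
qed

lemma C1_lipschitz:
  fixes g :: "real^'m \<Rightarrow> 'a::euclidean_space"
  assumes "C1_map U g" "open U" "compact K" "convex K" "K \<subseteq> U"
  obtains L f' where "L > 0" "\<And>x. x\<in>U \<Longrightarrow> (g has_derivative blinfun_apply (f' x)) (at x)" "continuous_on U f'"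
    "\<And>x. x \<in> K \<Longrightarrow> norm (f' x) \<le> L"
    "\<And>a b. a \<in> K \<Longrightarrow> b \<in> K \<Longrightarrow> norm (g a - g b) \<le> L * norm (a - b)"
proof -
  obtain f' where der: "\<And>x. x\<in>U \<Longrightarrow> (g has_derivative blinfun_apply (f' x)) (at x)"
    and cont: "continuous_on U f'" using C1_mapE[OF assms(1)] by blast
  have "compact (f' ` K)" using compact_continuous_image continuous_on_subset[OF cont assms(5)] assms(3) by blast
  then obtain L0 where L0: "\<And>x. x \<in> K \<Longrightarrow> norm (f' x) \<le> L0"
    using compact_imp_bounded bounded_iff by (metis imageI)
  define L where "L = max L0 1"
  have bd: "norm (f' x) \<le> L" if "x \<in> K" for x using L0[OF that] L_def by simp
  show thesis
  proof (rule that[OF _ der cont bd])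
    show "L > 0" using L_def by simp
    fix a b assume ab: "a \<in> K" "b \<in> K"
    show "norm (g a - g b) \<le> L * norm (a - b)"
    proof (rule differentiable_bound[where f=g and S=K and f'="\<lambda>x. blinfun_apply (f' x)"])
      fix x assume "x \<in> K"
      then show "(g has_derivative blinfun_apply (f' x)) (at x within K)"
        using der assms(5) has_derivative_at_withinI by blast
      show "onorm (blinfun_apply (f' x)) \<le> L" using bd[OF \<open>x\<in>K\<close>] by (simp add: norm_blinfun.rep_eq)
    qed (use assms ab in auto)
  qed
qed



lemma chart_neg:
  fixes g :: "real^'m \<Rightarrow> 'a::euclidean_space" and G :: "real^'m \<Rightarrow> 'a"
  assumes ch: "chart1 N U g" and nE: "negligible E" and GE: "G ` E \<subseteq> N"
    and lip: "\<And>a b. a \<in> E \<Longrightarrow> b \<in> E \<Longrightarrow> norm (G a - G b) \<le> L * norm (a - b)"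
    and oO: "open Op" and EO: "E \<subseteq> Op" and cG: "continuous_on Op G"
  shows "negligible {u\<in>U. g u \<in> G ` E}"
proof -
  have rp: "regular_param N U g" using ch unfolding chart1_def by blast
  have oU: "open U" and oN: "openin (top_of_set N) (g ` U)" and gUN: "g ` U \<subseteq> N"
    using rp unfolding regular_param_def by blast+
  obtain h where hom: "homeomorphism U (g ` U) g h"
    using rp unfolding regular_param_def by blast
  have hg: "\<And>x. x \<in> U \<Longrightarrow> h (g x) = x" using hom unfolding homeomorphism_def by blast
  define E' where "E' = {y\<in>E. G y \<in> g ` U}"
  have sub: "{u\<in>U. g u \<in> G ` E} \<subseteq> (h \<circ> G) ` E'"
  proof
    fix u assume "u \<in> {u\<in>U. g u \<in> G ` E}"
    then obtain y where y: "u \<in> U" "y \<in> E" "g u = G y" by blast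
    then have "G y \<in> g ` U" by (metis image_eqI)
    then have "y \<in> E'" unfolding E'_def using y(2) by simp
    moreover have "u = (h \<circ> G) y" using y(1) hg[of u] by (simp add: y(3)[symmetric])
    ultimately show "u \<in> (h \<circ> G) ` E'" by blast
  qed
  have "negligible ((h \<circ> G) ` E')"
  proof (rule negligible_locally_Lipschitz_image)
    show "DIM(real^'m) \<le> DIM(real^'m)" by simp
    have "E' \<subseteq> E" unfolding E'_def by blast
    then show "negligible E'" using nE negligible_subset by blast
    fix y assume yE: "y \<in> E'"
    then obtain u where u: "u \<in> U" "G y = g u" unfolding E'_def by auto
    obtain d c where dc: "d > 0" "c > 0" "ball u d \<subseteq> U"
      "\<And>v w. v \<in> ball u d \<Longrightarrow> w \<in> ball u d \<Longrightarrow> c * norm (v - w) \<le> norm (g v - g w)"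
      using chart_lower[OF ch u(1)] by blast
    have "openin (top_of_set (g ` U)) (g ` ball u d)"
      using homeomorphism_imp_open_map[OF hom open_subset[OF dc(3)]] by simp
    then have "openin (top_of_set N) (g ` ball u d)" using oN openin_trans by blast
    then obtain O' where O': "open O'" "g ` ball u d = N \<inter> O'" using openin_open by blast
    define T where "T = Op \<inter> G -` O'"
    show "\<exists>T B. open T \<and> y \<in> T \<and> (\<forall>y' \<in> E' \<inter> T. norm ((h \<circ> G) y' - (h \<circ> G) y) \<le> B * norm (y' - y))"
    proof (rule exI[of _ T], rule exI[of _ "L / c"], intro conjI ballI)
      show "open T" unfolding T_def
        using continuous_on_open_vimage[OF oO, THEN iffD1, OF cG, rule_format, OF O'(1)] by (simp add: Int_commute)
      have "g u \<in> N \<inter> O'" unfolding O'(2)[symmetric] using dc(1) by simp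
      then have "G y \<in> O'" by (simp add: u(2))
      moreover have "y \<in> Op" using yE EO unfolding E'_def by blast
      ultimately show "y \<in> T" unfolding T_def by simp
      fix y' assume y': "y' \<in> E' \<inter> T"
      then have y'E: "y' \<in> E" and "G y' \<in> O'" unfolding T_def E'_def by simp_all
      moreover have "G y' \<in> N" using GE y'E by blast
      ultimately have "G y' \<in> g ` ball u d" unfolding O'(2) by simp
      then obtain v where v: "v \<in> ball u d" "G y' = g v" by blast
      have vU: "v \<in> U" using v(1) dc(3) by blast
      have "(h \<circ> G) y' = v" using hg[OF vU] v(2) by simp
      moreover have "(h \<circ> G) y = u" using hg[OF u(1)] u(2) by simp
      ultimately have eq: "(h \<circ> G) y' - (h \<circ> G) y = v - u" by simp
      have uu: "u \<in> ball u d" using dc(1) by simp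
      have yE': "y \<in> E" using yE unfolding E'_def by simp
      have "c * norm (v - u) \<le> norm (g v - g u)" by (rule dc(4)[OF v(1) uu])
      also have "g v - g u = G y' - G y" using v(2) u(2) by simp
      also have "norm (G y' - G y) \<le> L * norm (y' - y)" by (rule lip[OF y'E yE'])
      finally have cle: "c * norm (v - u) \<le> L * norm (y' - y)" .
      have "norm (v - u) \<le> (L * norm (y' - y)) / c"
        using cle dc(2) by (metis pos_le_divide_eq mult.commute)
      then show "norm ((h \<circ> G) y' - (h \<circ> G) y) \<le> (L / c) * norm (y' - y)"
        unfolding eq by (metis times_divide_eq_left)
    qed
  qed
  then show ?thesis using sub negligible_subset by blast
qed

lemma riem_vol_zero:
  fixes N Z :: "'a::euclidean_space set"
  assumes "\<And>U (g :: real^'m \<Rightarrow> 'a). chart1 N U g \<Longrightarrow> negligible {u\<in>U. g u \<in> Z}"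
  shows "riem_vol TYPE('m::finite) N Z = 0"
proof -
  have "x \<le> 0" if xin: "x \<in> {(\<Sum>i<k. \<integral>\<^sup>+ u. indicator (U i \<inter> g i -` P i) u * ennreal (gram_jac (g i) u) \<partial>lborel) | k
        (U :: nat \<Rightarrow> (real^'m) set) g P.
        (\<forall>i<k. chart1 N (U i) (g i) \<and> P i \<subseteq> Z \<inter> g i ` U i) \<and> disjoint_family_on P {..<k}}" for x
  proof -
    obtain k and U :: "nat \<Rightarrow> (real^'m) set" and g P where x: "x = (\<Sum>i<k. \<integral>\<^sup>+ u. indicator (U i \<inter> g i -` P i) u * ennreal (gram_jac (g i) u) \<partial>lborel)"
      and ch: "\<forall>i<k. chart1 N (U i) (g i) \<and> P i \<subseteq> Z \<inter> g i ` U i"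
      using xin by blast
    have "(\<integral>\<^sup>+ u. indicator (U i \<inter> g i -` P i) u * ennreal (gram_jac (g i) u) \<partial>lborel) = 0" if i: "i < k" for i
    proof -
      have "negligible (U i \<inter> g i -` P i)"
        using assms[of "U i" "g i"] ch i negligible_subset[of "{u\<in>U i. g i u \<in> Z}" "U i \<inter> g i -` P i"] by auto
      then have "AE u in lebesgue. u \<notin> U i \<inter> g i -` P i"
        using AE_not_in negligible_iff_null_sets by blast
      then have "AE u in lborel. u \<notin> U i \<inter> g i -` P i" using AE_completion_iff by blast
      then have "AE u in lborel. indicator (U i \<inter> g i -` P i) u * ennreal (gram_jac (g i) u) = 0"
        by eventually_elim simp
      from nn_integral_cong_AE[OF this] show ?thesis by simp
    qed
    then show ?thesis using x by simp
  qed
  then show ?thesis unfolding riem_vol_def by (metis (no_types, lifting) Sup_least le_zero_eq)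
qed



lemma gdist_chart:
  fixes g0 :: "real^'m \<Rightarrow> 'a::euclidean_space"
  assumes der: "\<And>x. x\<in>U \<Longrightarrow> (g0 has_derivative blinfun_apply (f' x)) (at x)"
    and cont: "continuous_on U f'" and K: "convex K" "K \<subseteq> U"
    and bd: "\<And>x. x \<in> K \<Longrightarrow> norm (f' x) \<le> L" and gM: "g0 ` U \<subseteq> M"
    and ab: "a \<in> K" "b \<in> K"
  shows "gdist M (g0 a) (g0 b) \<le> ereal (L * norm (b - a))"
proof -
  define p where "p = (\<lambda>t::real. a + t *\<^sub>R (b - a))"
  define \<gamma> where "\<gamma> = (\<lambda>t. g0 (p t))"
  define D where "D = (\<lambda>t. blinfun_apply (f' (p t)) (b - a))"
  have pK: "p t \<in> K" if "t \<in> {0..1}" for t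
  proof -
    have "p t = (1 - t) *\<^sub>R a + t *\<^sub>R b" unfolding p_def by (simp add: algebra_simps)
    then show ?thesis using K(1) ab that unfolding convex_def by auto
  qed
  have pd: "(p has_derivative (\<lambda>s. s *\<^sub>R (b - a))) (at t)" for t
    unfolding p_def by (auto intro!: derivative_eq_intros)
  have vd: "(\<gamma> has_vector_derivative D t) (at t)" if "t \<in> {0..1}" for t
  proof -
    have "p t \<in> U" using pK[OF that] K by auto
    have "(\<gamma> has_derivative (\<lambda>s. blinfun_apply (f' (p t)) (s *\<^sub>R (b - a)))) (at t)"
      unfolding \<gamma>_def using has_derivative_compose[OF pd der[OF \<open>p t \<in> U\<close>]] by (simp add: o_def)
    then show ?thesis unfolding has_vector_derivative_def D_def by (simp add: blinfun.scaleR_right)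
  qed
  have cp: "continuous_on {0..1} p" unfolding p_def by (intro continuous_intros)
  have cD: "continuous_on {0..1} D"
  proof -
    have "continuous_on {0..1} (f' \<circ> p)"
    proof (rule continuous_on_compose[OF cp continuous_on_subset[OF cont]])
      show "p ` {0..1} \<subseteq> U" using pK K by auto
    qed
    then show ?thesis unfolding D_def using blinfun.continuous_on[of "{0..1}" "\<lambda>t. f' (p t)" "\<lambda>_. b - a"]
      by (simp add: o_def)
  qed
  have valid: "valid_path \<gamma>" unfolding valid_path_def
    by (rule C1_differentiable_imp_piecewise, unfold C1_differentiable_on_def, rule exI[of _ D]) (use vd cD in auto)
  have "\<gamma> t \<in> M" if "t \<in> {0..1}" for t using pK[OF that] K(2) gM unfolding \<gamma>_def by blast
  then have img: "path_image \<gamma> \<subseteq> M" unfolding path_image_def by blast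
  have st: "pathstart \<gamma> = g0 a" "pathfinish \<gamma> = g0 b" unfolding pathstart_def pathfinish_def \<gamma>_def p_def by auto
  have "path_len \<gamma> = integral {0..1} (\<lambda>t. norm (D t))"
    unfolding path_len_def by (rule integral_cong) (simp add: vector_derivative_at[OF vd])
  also have "\<dots> \<le> integral {0..1} (\<lambda>t::real. L * norm (b - a))"
  proof (rule integral_le)
    show "(\<lambda>t. norm (D t)) integrable_on {0..1}"
      by (intro integrable_continuous_real continuous_on_norm cD)
    show "(\<lambda>t::real. L * norm (b - a)) integrable_on {0..1}" by (rule integrable_const_ivl)
    fix t :: real assume "t \<in> {0..1}"
    then show "norm (D t) \<le> L * norm (b - a)"
      unfolding D_def using norm_blinfun[of "f' (p t)" "b - a"] bd[OF pK] 
      by (meson mult_right_mono norm_ge_zero order_trans)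
  qed
  also have "\<dots> = L * norm (b - a)" by simp
  finally have "path_len \<gamma> \<le> L * norm (b - a)" .
  moreover have "gdist M (g0 a) (g0 b) \<le> ereal (path_len \<gamma>)"
    unfolding gdist_def using valid img st by (intro Inf_lower) blast
  ultimately show ?thesis by (meson ereal_less_eq(3) order_trans)
qed



lemma card_cells:
  fixes F :: "(real^'n) set" and c s :: real and k0 :: 'n
  assumes c: "c > 0" and s: "s > 0"
    and F: "\<And>x. x \<in> F \<Longrightarrow> x $ k0 = 0 \<and> (\<forall>i. \<bar>x $ i\<bar> \<le> c) \<and> (\<exists>i. \<bar>x $ i\<bar> = c)"
  shows "finite ((\<lambda>x i. \<lfloor>x $ i / s\<rfloor>) ` F)"
    and "real (card ((\<lambda>x i. \<lfloor>x $ i / s\<rfloor>) ` F)) \<le> 2 * CARD('n) * (2 * c / s + 2) ^ (CARD('n) - 2)"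
proof -
  define q where "q = (\<lambda>(x::real^'n) i. \<lfloor>x $ i / s\<rfloor>)"
  define I where "I = {\<lfloor>-c/s\<rfloor>..\<lfloor>c/s\<rfloor>}"
  define T where "T = (\<lambda>i \<sigma> l. if l = k0 then {0} else if l = i then {\<lfloor>\<sigma>/s\<rfloor>} else I)"
  define m where "m = card I"
  have sub: "q ` F \<subseteq> (\<Union>i\<in>-{k0}. \<Union>\<sigma>\<in>{-c, c}. PiE UNIV (T i \<sigma>))"
  proof
    fix z assume "z \<in> q ` F"
    then obtain x where x: "x \<in> F" "z = q x" by auto
    obtain i where i: "\<bar>x $ i\<bar> = c" using F[OF x(1)] by auto
    have ik: "i \<noteq> k0" using i F[OF x(1)] c by auto
    obtain \<sigma> where \<sigma>: "\<sigma> \<in> {-c, c}" "x $ i = \<sigma>" using i by (cases "x $ i \<ge> 0") auto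
    have "z l \<in> T i \<sigma> l" for l
    proof -
      have "\<bar>x $ l\<bar> \<le> c" using F[OF x(1)] by auto
      then have "-c \<le> x $ l" "x $ l \<le> c" by arith+
      then have "-c / s \<le> x $ l / s" "x $ l / s \<le> c / s"
        using divide_right_mono[OF _ less_imp_le[OF s]] by blast+
      then have "\<lfloor>-c/s\<rfloor> \<le> \<lfloor>x $ l / s\<rfloor> \<and> \<lfloor>x $ l / s\<rfloor> \<le> \<lfloor>c/s\<rfloor>" by (auto intro: floor_mono)
      then show ?thesis using F[OF x(1)] \<sigma> unfolding T_def I_def x(2) q_def by auto
    qed
    then have "z \<in> PiE UNIV (T i \<sigma>)" by (simp add: PiE_iff)
    then show "z \<in> (\<Union>i\<in>-{k0}. \<Union>\<sigma>\<in>{-c, c}. PiE UNIV (T i \<sigma>))" using ik \<sigma> by blast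
  qed
  have finT: "finite (T i \<sigma> l)" for i \<sigma> l unfolding T_def I_def by auto
  have finPi: "finite (PiE UNIV (T i \<sigma>))" for i \<sigma> by (rule finite_PiE) (auto simp: finT)
  have finU: "finite (\<Union>i\<in>-{k0}. \<Union>\<sigma>\<in>{-c, c}. PiE UNIV (T i \<sigma>))" using finPi by auto
  then show "finite ((\<lambda>x i. \<lfloor>x $ i / s\<rfloor>) ` F)" using sub finite_subset q_def by metis
  have cardPi: "card (PiE UNIV (T i \<sigma>)) = m ^ (CARD('n) - 2)" if ik: "i \<noteq> k0" for i \<sigma>
  proof -
    have "card (PiE UNIV (T i \<sigma>)) = (\<Prod>l\<in>UNIV. card (T i \<sigma> l))" by (simp add: card_PiE)
    also have "\<dots> = (\<Prod>l\<in>UNIV. if l \<in> {k0, i} then 1 else m)"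
      by (rule prod.cong) (auto simp: T_def m_def)
    also have "\<dots> = (\<Prod>l\<in>-{k0, i}. if l \<in> {k0, i} then 1 else m)"
      by (rule prod.mono_neutral_right) auto
    also have "\<dots> = (\<Prod>l\<in>-{k0, i}. m)" by (rule prod.cong) auto
    also have "\<dots> = m ^ card (-{k0, i})" by (rule prod_constant)
    also have "card (-{k0, i}) = CARD('n) - card {k0, i}"
      using card_Diff_subset[of "{k0,i}" UNIV] by (simp add: Compl_eq_Diff_UNIV)
    also have "card {k0, i} = 2" using ik by simp
    finally show ?thesis .
  qed
  have "card (q ` F) \<le> card (\<Union>i\<in>-{k0}. \<Union>\<sigma>\<in>{-c, c}. PiE UNIV (T i \<sigma>))"
    by (rule card_mono[OF finU sub])
  also have "\<dots> \<le> (\<Sum>i\<in>-{k0}. card (\<Union>\<sigma>\<in>{-c, c}. PiE UNIV (T i \<sigma>)))" by (rule card_UN_le) simp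
  also have "\<dots> \<le> (\<Sum>i\<in>-{k0}. (\<Sum>\<sigma>\<in>{-c, c}. card (PiE UNIV (T i \<sigma>))))"
    by (intro sum_mono card_UN_le) simp
  also have "\<dots> \<le> (\<Sum>i\<in>-{k0}. 2 * m ^ (CARD('n) - 2))"
  proof (intro sum_mono)
    fix i assume "i \<in> -{k0}"
    then have le1: "(\<Sum>\<sigma>\<in>{-c, c}. card (PiE UNIV (T i \<sigma>))) \<le> (\<Sum>\<sigma>\<in>{-c, c}. m ^ (CARD('n) - 2))"
      using cardPi by (intro sum_mono) auto
    have "card {-c, c} = 2" using c by simp
    then have "(\<Sum>\<sigma>\<in>{-c, c}. m ^ (CARD('n) - 2)) = 2 * m ^ (CARD('n) - 2)" by simp
    with le1 show "(\<Sum>\<sigma>\<in>{-c, c}. card (PiE UNIV (T i \<sigma>))) \<le> 2 * m ^ (CARD('n) - 2)" by linarith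
  qed
  also have "\<dots> \<le> CARD('n) * (2 * m ^ (CARD('n) - 2))"
    using card_mono[of UNIV "-{k0}"] by (simp add: mult_right_mono)
  finally have cq: "card (q ` F) \<le> CARD('n) * (2 * m ^ (CARD('n) - 2))" .
  have mnat: "m = nat (\<lfloor>c/s\<rfloor> - \<lfloor>-c/s\<rfloor> + 1)" unfolding m_def I_def by simp
  have "-c/s \<le> c/s" using c s by (simp add: divide_right_mono)
  then have fl: "\<lfloor>-c/s\<rfloor> \<le> \<lfloor>c/s\<rfloor>" by (rule floor_mono)
  have "real m = real_of_int (\<lfloor>c/s\<rfloor> - \<lfloor>-c/s\<rfloor> + 1)" unfolding mnat using fl by simp
  also have "\<dots> \<le> 2 * c / s + 2"
  proof -
    have "real_of_int \<lfloor>c/s\<rfloor> \<le> c/s" by (rule of_int_floor_le)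
    moreover have "real_of_int \<lfloor>-c/s\<rfloor> > -c/s - 1" by (rule real_of_int_floor_gt_diff_one)
    moreover have "2 * c / s = c/s + c/s" "-c/s = -(c/s)" by simp_all
    ultimately show ?thesis by linarith
  qed
  finally have mb: "real m \<le> 2 * c / s + 2" .
  have "real (card (q ` F)) \<le> real (CARD('n) * (2 * m ^ (CARD('n) - 2)))"
    using cq by (simp only: of_nat_le_iff)
  also have "\<dots> = real (CARD('n)) * (2 * real m ^ (CARD('n) - 2))" by simp
  also have "\<dots> \<le> real (CARD('n)) * (2 * (2 * c / s + 2) ^ (CARD('n) - 2))"
    by (intro mult_left_mono power_mono mb) auto
  finally show "real (card ((\<lambda>x i. \<lfloor>x $ i / s\<rfloor>) ` F)) \<le> 2 * CARD('n) * (2 * c / s + 2) ^ (CARD('n) - 2)"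
    unfolding q_def by simp
qed

lemma floor_eq_close:
  fixes u v :: real
  assumes "\<lfloor>u\<rfloor> = \<lfloor>v\<rfloor>"
  shows "\<bar>u - v\<bar> < 1"
proof -
  have "real_of_int \<lfloor>u\<rfloor> \<le> u" "u < real_of_int \<lfloor>u\<rfloor> + 1" by linarith+
  moreover have "real_of_int \<lfloor>v\<rfloor> \<le> v" "v < real_of_int \<lfloor>v\<rfloor> + 1" by linarith+
  ultimately show ?thesis using assms by linarith
qed

lemma cover_lemma:
  fixes g0 :: "real^'n \<Rightarrow> 'a::euclidean_space" and F :: "(real^'n) set" and Dr M :: "'a set" and c L r :: real
  assumes c: "c > 0" and L: "L > 0" and r: "r > 0"
    and Fpr: "\<And>x. x \<in> F \<Longrightarrow> x $ k0 = 0 \<and> (\<forall>i. \<bar>x $ i\<bar> \<le> c) \<and> (\<exists>i. \<bar>x $ i\<bar> = c)"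
    and DF: "Dr \<subseteq> g0 ` F" and DM: "Dr \<subseteq> M"
    and gd: "\<And>a b. a \<in> F \<Longrightarrow> b \<in> F \<Longrightarrow> gdist M (g0 a) (g0 b) \<le> ereal (L * norm (b - a))"
  shows "\<exists>X. finite X \<and> X \<subseteq> Dr \<and> Dr \<subseteq> (\<Union>x\<in>X. gball M x r)
     \<and> real (card X) \<le> 2 * CARD('n) * (2 * c / (r / (L * CARD('n))) + 2) ^ (CARD('n) - 2)"
proof -
  define d where "d = real CARD('n)"
  have dpos: "d > 0" unfolding d_def by simp
  define s where "s = r / (L * d)"
  have spos: "s > 0" unfolding s_def using r L dpos by simp
  define q where "q = (\<lambda>(x::real^'n) i. \<lfloor>x $ i / s\<rfloor>)"
  define a where "a = (\<lambda>p. SOME x. x \<in> F \<and> g0 x = p)"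
  have a: "a p \<in> F \<and> g0 (a p) = p" if "p \<in> Dr" for p
  proof -
    have "\<exists>x. x \<in> F \<and> g0 x = p" using DF that by blast
    then show ?thesis unfolding a_def by (rule someI_ex)
  qed
  define Qm where "Qm = (\<lambda>p. q (a p))"
  define rep where "rep = (\<lambda>z. SOME p. p \<in> Dr \<and> Qm p = z)"
  have rep: "rep z \<in> Dr \<and> Qm (rep z) = z" if "z \<in> Qm ` Dr" for z
  proof -
    have "\<exists>p. p \<in> Dr \<and> Qm p = z" using that by blast
    then show ?thesis unfolding rep_def by (rule someI_ex)
  qed
  define X where "X = rep ` (Qm ` Dr)"
  have XD: "X \<subseteq> Dr" unfolding X_def using rep by blast
  have QmF: "Qm ` Dr \<subseteq> q ` F" unfolding Qm_def using a by blast
  have finq: "finite (q ` F)" and cardq: "real (card (q ` F)) \<le> 2 * CARD('n) * (2 * c / s + 2) ^ (CARD('n) - 2)"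
    using card_cells[OF c spos Fpr] unfolding q_def by blast+
  have finQm: "finite (Qm ` Dr)" using finite_subset[OF QmF finq] .
  have finX: "finite X" unfolding X_def using finQm by blast
  have "card X \<le> card (Qm ` Dr)" unfolding X_def by (rule card_image_le[OF finQm])
  also have "\<dots> \<le> card (q ` F)" by (rule card_mono[OF finq QmF])
  finally have "real (card X) \<le> real (card (q ` F))" by simp
  with cardq have cardX: "real (card X) \<le> 2 * CARD('n) * (2 * c / s + 2) ^ (CARD('n) - 2)" by linarith
  have cov: "Dr \<subseteq> (\<Union>x\<in>X. gball M x r)"
  proof
    fix p assume pD: "p \<in> Dr"
    define x where "x = rep (Qm p)"
    have xX: "x \<in> X" unfolding x_def X_def using pD by blast
    have x: "x \<in> Dr" "Qm x = Qm p" unfolding x_def using rep pD by blast+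
    have ax: "a x \<in> F" "g0 (a x) = x" using a[OF x(1)] by blast+
    have ap: "a p \<in> F" "g0 (a p) = p" using a[OF pD] by blast+
    have comp: "\<bar>(a p - a x) $ i\<bar> \<le> s" for i
    proof -
      have "q (a x) i = q (a p) i" using x(2) unfolding Qm_def by simp
      then have "\<lfloor>a p $ i / s\<rfloor> = \<lfloor>a x $ i / s\<rfloor>" unfolding q_def by simp
      then have "\<bar>a p $ i / s - a x $ i / s\<bar> < 1" by (rule floor_eq_close)
      then have "\<bar>(a p $ i - a x $ i) / s\<bar> < 1" by (simp add: diff_divide_distrib)
      then have "\<bar>a p $ i - a x $ i\<bar> / s < 1" using spos by simp
      then have "\<bar>a p $ i - a x $ i\<bar> < s" using spos by (simp add: divide_less_eq)
      then show ?thesis by simp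
    qed
    have "norm (a p - a x) \<le> sum (\<lambda>i. \<bar>(a p - a x) $ i\<bar>) UNIV" by (rule norm_le_l1_cart)
    also have "\<dots> \<le> of_nat (card (UNIV :: 'n set)) * s" by (rule sum_bounded_above) (rule comp)
    also have "\<dots> = r / L" unfolding s_def d_def using L by simp
    finally have nb: "norm (a p - a x) \<le> r / L" .
    have "gdist M x p = gdist M (g0 (a x)) (g0 (a p))" using ax ap by simp
    also have "\<dots> \<le> ereal (L * norm (a p - a x))" by (rule gd[OF ax(1) ap(1)])
    also have "L * norm (a p - a x) \<le> L * (r / L)" using nb L by (intro mult_left_mono) auto
    then have "ereal (L * norm (a p - a x)) \<le> ereal r" using L by simp
    finally have "gdist M x p \<le> ereal r" .
    moreover have "p \<in> M" using DM pD by blast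
    ultimately have "p \<in> gball M x r" unfolding gball_def by simp
    then show "p \<in> (\<Union>x\<in>X. gball M x r)" using xX by blast
  qed
  show ?thesis
    by (rule exI[of _ X]) (use finX XD cov cardX in \<open>simp add: s_def d_def\<close>)
qed

lemma cover_arith:
  fixes r c L d Xc :: real
  assumes r0: "r > 0" and r1: "r < 1" and c: "c > 0" and L: "L > 0" and d: "d > 0"
    and X: "Xc \<le> 2 * d * (2 * c / (r / (L * d)) + 2) ^ n"
  shows "r ^ n * Xc \<le> 2 * d * (2 * c * L * d + 2) ^ n"
proof -
  have "r ^ n * Xc \<le> r ^ n * (2 * d * (2 * c / (r / (L * d)) + 2) ^ n)"
    using X r0 by (intro mult_left_mono) auto
  also have "\<dots> = 2 * d * (r * (2 * c / (r / (L * d)) + 2)) ^ n"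
    by (simp only: power_mult_distrib mult.assoc mult.left_commute)
  also have "r * (2 * c / (r / (L * d)) + 2) = 2 * c * L * d + 2 * r"
    using r0 L d by (simp add: field_simps)
  also have "2 * d * (2 * c * L * d + 2 * r) ^ n \<le> 2 * d * (2 * c * L * d + 2) ^ n"
    using r0 r1 c L d by (intro mult_left_mono power_mono) auto
  finally show ?thesis .
qed



theorem lemma6p13:
  fixes M A V :: "'a::euclidean_space set" and x0 :: 'a
  assumes "2 \<le> CARD('n::finite)" and "CARD('n) \<le> DIM('a)"
    and "CARD('n) = Suc CARD('k::finite)"
    and "C2_submanifold TYPE('n) M" and "closed M"
    and "compact A" and "C2_submfd_with_bdry TYPE('n) M A"
    and "x0 \<in> mbdry M A" and "openin (top_of_set M) V" and "x0 \<in> V"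
  shows "\<exists>W. openin (top_of_set M) W \<and> x0 \<in> W \<and> mclosure M W \<subseteq> V
           \<and> riem_vol TYPE('n) M (mbdry M W) = 0
           \<and> riem_vol TYPE('k) (mbdry M A) (bdry_rel M A W) = 0
           \<and> Limsup (at_right 0) (\<lambda>r. ereal (r ^ (CARD('n) - 2)) * ereal_of_enat (covnum M (bdry_rel M A W) r)) < \<infinity>"
proof -
  note cardn = assms(1) and cardk = assms(3)
  have AM: "A \<subseteq> M" using assms(7) unfolding C2_submfd_with_bdry_def by auto
  obtain U0 :: "(real^'n) set" and g0 k0 where ch2: "chart2 M U0 g0" and U00: "0 \<in> U0" and g00: "g0 0 = x0"
    and hs: "g0 ` (U0 \<inter> {x. 0 \<le> x $ k0}) = g0 ` U0 \<inter> A"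
    using assms(7,8) unfolding C2_submfd_with_bdry_def by blast
  have ch1: "chart1 M U0 g0" using chart2_imp_chart1[OF ch2] .
  have oU0: "open U0" and gU0M: "g0 ` U0 \<subseteq> M" and oGU0: "openin (top_of_set M) (g0 ` U0)"
    and C1: "C1_map U0 g0"
    using ch1 unfolding chart1_def regular_param_def by auto
  obtain h0 where hom0: "homeomorphism U0 (g0 ` U0) g0 h0"
    using ch1 unfolding chart1_def regular_param_def by auto
  have injg0: "inj_on g0 U0" using hom0 unfolding homeomorphism_def by (metis inj_on_inverseI)
  have cg0: "continuous_on U0 g0" using hom0 unfolding homeomorphism_def by auto
  have openmap: "openin (top_of_set M) (g0 ` S)" if "open S" "S \<subseteq> U0" for S
    using homeomorphism_imp_open_map[OF hom0 open_subset[OF that(2,1)]] oGU0 openin_trans by blast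
  obtain OV where OV: "open OV" "V = M \<inter> OV" using assms(9) openin_open by blast
  have "open (U0 \<inter> g0 -` OV)"
    using continuous_on_open_vimage[OF oU0, THEN iffD1, OF cg0, rule_format, OF OV(1)] by (simp add: Int_commute)
  moreover have "0 \<in> U0 \<inter> g0 -` OV" using U00 g00 assms(10) OV by auto
  ultimately obtain \<epsilon> where \<epsilon>: "\<epsilon> > 0" "ball 0 \<epsilon> \<subseteq> U0 \<inter> g0 -` OV" using open_contains_ball by blast
  define d where "d = CARD('n)"
  have dpos: "d > 0" using d_def by simp
  define c where "c = \<epsilon> / (2 * d)"
  have cpos: "c > 0" unfolding c_def using \<epsilon> dpos by simp
  define a1 :: "real^'n" where "a1 = (\<chi> i. - c)"
  define b1 :: "real^'n" where "b1 = (\<chi> i. c)"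
  define Q where "Q = box a1 b1"
  define Qc where "Qc = cbox a1 b1"
  have aux1: "(-c \<le> t \<and> t \<le> c) \<longleftrightarrow> \<bar>t\<bar> \<le> c" for t :: real by arith
  have aux2: "(-c < t \<and> t < c) \<longleftrightarrow> \<bar>t\<bar> < c" for t :: real by arith
  have memQc: "x \<in> Qc \<longleftrightarrow> (\<forall>i. \<bar>x $ i\<bar> \<le> c)" for x
    unfolding Qc_def a1_def b1_def mem_box_cart vec_lambda_beta aux1 ..
  have memQ: "x \<in> Q \<longleftrightarrow> (\<forall>i. \<bar>x $ i\<bar> < c)" for x
    unfolding Q_def a1_def b1_def mem_box_cart vec_lambda_beta aux2 ..
  have Qcball: "Qc \<subseteq> ball 0 \<epsilon>"
  proof
    fix x assume "x \<in> Qc"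
    then have "\<forall>i. \<bar>x $ i\<bar> \<le> c" using memQc by auto
    then have "sum (\<lambda>i. \<bar>x$i\<bar>) UNIV \<le> of_nat (card (UNIV::'n set)) * c"
      by (intro sum_bounded_above) auto
    then have "norm x \<le> d * c" using norm_le_l1_cart[of x] d_def by simp
    also have "\<dots> < \<epsilon>" unfolding c_def using dpos \<epsilon> by (simp add: field_simps)
    finally show "x \<in> ball 0 \<epsilon>" by simp
  qed
  have QcU0: "Qc \<subseteq> U0" and QcV: "g0 ` Qc \<subseteq> V" using Qcball \<epsilon> gU0M OV by auto
  have QQc: "Q \<subseteq> Qc" unfolding Q_def Qc_def by (rule box_subset_cbox)
  have cQc: "compact Qc" "convex Qc" unfolding Qc_def by auto
  obtain L f' where L: "L > 0" "\<And>x. x\<in>U0 \<Longrightarrow> (g0 has_derivative blinfun_apply (f' x)) (at x)" "continuous_on U0 f'"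
    "\<And>x. x \<in> Qc \<Longrightarrow> norm (f' x) \<le> L"
    "\<And>a b. a \<in> Qc \<Longrightarrow> b \<in> Qc \<Longrightarrow> norm (g0 a - g0 b) \<le> L * norm (a - b)"
    using C1_lipschitz[OF C1 oU0 cQc QcU0] by blast
  define W where "W = g0 ` Q"
  have oW: "openin (top_of_set M) W" unfolding W_def Q_def using openmap QQc QcU0 Q_def by auto
  have "0 \<in> Q" using memQ cpos by simp
  then have x0W: "x0 \<in> W" unfolding W_def using g00 by (metis image_eqI)
  have WM: "W \<subseteq> M" using oW openin_subset by (metis topspace_euclidean_subtopology)
  have clQc: "closedin (top_of_set M) (g0 ` Qc)"
  proof -
    have cpt: "compact (g0 ` Qc)" by (rule compact_continuous_image[OF continuous_on_subset[OF cg0 QcU0] cQc(1)])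
    have e: "M \<inter> g0 ` Qc = g0 ` Qc" using QcU0 gU0M by blast
    show ?thesis using closedin_closed_Int[OF compact_imp_closed[OF cpt], of M] unfolding e .
  qed
  have clW: "mclosure M W \<subseteq> g0 ` Qc" unfolding mclosure_def W_def
    by (rule closure_of_minimal[OF image_mono[OF QQc] clQc])
  have clWV: "mclosure M W \<subseteq> V" using clW QcV by (rule order_trans)
  have closedMW: "closedin (top_of_set M) (M - W)" using oW unfolding openin_closedin_eq by simp
  have intW: "minterior M W = W"
  proof -
    have "minterior M W = M - (M - W)" unfolding minterior_def mclosure_def
      by (simp add: closure_of_closedin[OF closedMW])
    also have "\<dots> = W" using WM by blast
    finally show ?thesis .
  qed
  have bdW: "mbdry M W \<subseteq> g0 ` (Qc - Q)"
  proof
    fix p assume "p \<in> mbdry M W"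
    then have p: "p \<in> mclosure M W" "p \<notin> W" unfolding mbdry_def intW by simp_all
    then obtain y where y: "y \<in> Qc" "p = g0 y" using clW by blast
    then have "y \<notin> Q" using p(2) unfolding W_def by blast
    then show "p \<in> g0 ` (Qc - Q)" using y by blast
  qed
  have negfr: "negligible (Qc - Q)" unfolding Qc_def Q_def by (rule negligible_frontier_interval)
  have vol1: "riem_vol TYPE('n) M (mbdry M W) = 0"
  proof (rule riem_vol_zero)
    fix U and g :: "real^'n \<Rightarrow> 'a" assume chg: "chart1 M U g"
    have "negligible {u\<in>U. g u \<in> g0 ` (Qc - Q)}"
    proof (rule chart_neg[OF chg negfr _ _ oU0 _ cg0, of L])
      show "g0 ` (Qc - Q) \<subseteq> M" using gU0M QcU0 by blast
      show "Qc - Q \<subseteq> U0" using QcU0 by blast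
      fix a b assume "a \<in> Qc - Q" "b \<in> Qc - Q"
      then show "norm (g0 a - g0 b) \<le> L * norm (a - b)" using L(5) by simp
    qed
    moreover have "{u\<in>U. g u \<in> mbdry M W} \<subseteq> {u\<in>U. g u \<in> g0 ` (Qc - Q)}" using bdW by blast
    ultimately show "negligible {u\<in>U. g u \<in> mbdry M W}" using negligible_subset by blast
  qed
  have AclM: "closedin (top_of_set M) A"
    using closedin_closed_Int[OF compact_imp_closed[OF assms(6)], of M] AM by (simp add: Int_absorb1)
  have clA: "mclosure M A = A" unfolding mclosure_def using closure_of_closedin[OF AclM] .
  have bdA: "mbdry M A = A \<inter> mclosure M (M - A)"
  proof -
    have "mclosure M (M - A) \<subseteq> M" unfolding mclosure_def
      using closure_of_subset_topspace by (metis topspace_euclidean_subtopology)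
    then show ?thesis unfolding mbdry_def minterior_def clA using AM by blast
  qed
  have closedbd: "closedin (top_of_set M) (mbdry M A)"
    unfolding bdA mclosure_def by (rule closedin_Int[OF AclM closedin_closure_of])
  have neg: "g0 x \<notin> A" if "x \<in> U0" "x $ k0 < 0" for x
  proof
    assume "g0 x \<in> A"
    then have "g0 x \<in> g0 ` U0 \<inter> A" using that by blast
    then have "g0 x \<in> g0 ` (U0 \<inter> {x. 0 \<le> x $ k0})" by (simp only: hs)
    then obtain x' where "x' \<in> U0" "0 \<le> x' $ k0" "g0 x' = g0 x" by auto
    then show False using injg0 that unfolding inj_on_def by force
  qed
  have pos: "g0 x \<notin> mclosure M (M - A)" if xU: "x \<in> U0" and xk: "x $ k0 > 0" for x
  proof
    assume xin: "g0 x \<in> mclosure M (M - A)"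
    define Tp where "Tp = g0 ` (U0 \<inter> {x. 0 < x $ k0})"
    have "open {x::real^'n. 0 < x $ k0}" by (rule open_halfspace_component_gt_cart)
    then have "open (U0 \<inter> {x. 0 < x $ k0})" by (rule open_Int[OF oU0])
    then have op: "openin (top_of_set M) Tp" unfolding Tp_def by (rule openmap) blast
    have "g0 ` (U0 \<inter> {x. 0 < x $ k0}) \<subseteq> g0 ` (U0 \<inter> {x. 0 \<le> x $ k0})" by (rule image_mono) auto
    also have "\<dots> \<subseteq> A" unfolding hs by (rule Int_lower2)
    finally have TpA: "Tp \<subseteq> A" unfolding Tp_def .
    have mem: "g0 x \<in> Tp" unfolding Tp_def using xU xk by simp
    have "\<forall>T. g0 x \<in> T \<and> openin (top_of_set M) T \<longrightarrow> (\<exists>y. y \<in> M - A \<and> y \<in> T)"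
      using xin unfolding mclosure_def in_closure_of by (rule conjunct2)
    then have "\<exists>y. y \<in> M - A \<and> y \<in> Tp" using op mem by simp
    then show False using TpA by blast
  qed
  have zero: "g0 x \<in> mbdry M A" if xU: "x \<in> U0" and x0: "x $ k0 = 0" for x
  proof -
    have "g0 x \<in> g0 ` (U0 \<inter> {x. 0 \<le> x $ k0})" using xU x0 by simp
    then have "g0 x \<in> g0 ` U0 \<inter> A" by (simp only: hs)
    then have "g0 x \<in> A" by blast
    moreover have "g0 x \<in> mclosure M (M - A)" unfolding mclosure_def in_closure_of
    proof (intro conjI allI impI)
      show "g0 x \<in> topspace (top_of_set M)" using gU0M xU by auto
      fix T assume T: "g0 x \<in> T \<and> openin (top_of_set M) T"
      then obtain OT where OT: "open OT" "T = M \<inter> OT" using openin_open by blast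
      have "open (U0 \<inter> g0 -` OT)"
        using continuous_on_open_vimage[OF oU0, THEN iffD1, OF cg0, rule_format, OF OT(1)] by (simp add: Int_commute)
      moreover have "x \<in> U0 \<inter> g0 -` OT" using xU T OT by auto
      ultimately obtain r where r: "r > 0" "ball x r \<subseteq> U0 \<inter> g0 -` OT" using open_contains_ball by blast
      define y where "y = x - (r/2) *\<^sub>R axis k0 1"
      have "y \<in> ball x r" using r(1) unfolding y_def by (simp add: dist_norm)
      then have yU: "y \<in> U0" and yO: "g0 y \<in> OT" using r by auto
      have "y $ k0 < 0" using r(1) x0 unfolding y_def by simp
      then have "g0 y \<notin> A" using neg yU by blast
      moreover have "g0 y \<in> M" using gU0M yU by blast
      moreover have "g0 y \<in> T" unfolding OT(2) using yO \<open>g0 y \<in> M\<close> by simp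
      ultimately show "\<exists>z. z \<in> M - A \<and> z \<in> T" by blast
    qed
    ultimately show ?thesis unfolding bdA by blast
  qed
  have bdM: "mbdry M A \<subseteq> M" using bdA AM by auto
  have brA: "bdry_rel M A W \<subseteq> mbdry M A"
  proof -
    have "mclosure M (W \<inter> mbdry M A) \<subseteq> mbdry M A"
      unfolding mclosure_def by (rule closure_of_minimal[OF Int_lower2 closedbd])
    then show ?thesis unfolding bdry_rel_def by blast
  qed
  define F where "F = {x \<in> Qc - Q. x $ k0 = 0}"
  have brF: "bdry_rel M A W \<subseteq> g0 ` F"
  proof
    fix p assume p: "p \<in> bdry_rel M A W"
    then have "p \<in> mclosure M W" unfolding bdry_rel_def mclosure_def by (meson IntD1 closure_of_mono inf_le1 subsetD)
    then obtain x where x: "x \<in> Qc" "p = g0 x" using clW by auto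
    have "p \<in> mclosure M (M - W)" using p bdM unfolding bdry_rel_def mclosure_def
      by (meson Diff_mono IntD2 closure_of_mono order_refl subsetD)
    then have "p \<notin> W" using closure_of_closedin[OF closedMW] unfolding mclosure_def by auto
    then have xQ: "x \<notin> Q" unfolding W_def x(2) by blast
    have pA: "p \<in> mbdry M A" using p brA by auto
    then have "x $ k0 \<ge> 0" using neg x QcU0 bdA by (metis IntD1 not_le subsetD)
    moreover have "\<not> x $ k0 > 0" using pos x QcU0 pA bdA by blast
    ultimately show "p \<in> g0 ` F" using x xQ unfolding F_def by auto
  qed
  have Fsub: "F \<subseteq> Qc" "F \<subseteq> U0" using QcU0 unfolding F_def by blast+
  have cardk': "card (-{k0}) = CARD('k)"
  proof -
    have "card (-{k0}) = CARD('n) - card {k0}"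
      using card_Diff_subset[of "{k0}" UNIV] by (simp add: Compl_eq_Diff_UNIV)
    then show ?thesis using cardk by simp
  qed
  obtain \<beta> :: "'k \<Rightarrow> 'n" where \<beta>: "bij_betw \<beta> UNIV (-{k0})"
    using finite_same_card_bij[of "UNIV :: 'k set" "-{k0}"] cardk' by auto
  define \<beta>i where "\<beta>i = inv_into UNIV \<beta>"
  have \<beta>k: "\<beta> j \<noteq> k0" for j using \<beta> unfolding bij_betw_def by auto
  have \<beta>i\<beta>: "\<beta>i (\<beta> j) = j" for j using \<beta> unfolding \<beta>i_def bij_betw_def by (simp add: inv_into_f_f)
  have \<beta>\<beta>i: "\<beta> (\<beta>i i) = i" if "i \<noteq> k0" for i
  proof -
    have "i \<in> range \<beta>" using \<beta> that unfolding bij_betw_def by auto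
    then show ?thesis unfolding \<beta>i_def by (rule f_inv_into_f)
  qed
  define \<iota> :: "real^'k \<Rightarrow> real^'n" where "\<iota> = (\<lambda>y. \<chi> i. if i = k0 then 0 else y $ \<beta>i i)"
  have \<iota>k: "\<iota> y $ k0 = 0" for y unfolding \<iota>_def by simp
  have \<iota>\<beta>: "\<iota> y $ \<beta> j = y $ j" for y j unfolding \<iota>_def using \<beta>k \<beta>i\<beta> by simp
  have \<iota>surj: "x = \<iota> (\<chi> j. x $ \<beta> j)" if "x $ k0 = 0" for x
    unfolding \<iota>_def vec_eq_iff using that \<beta>\<beta>i by auto
  have \<iota>lin: "linear \<iota>" by (rule linearI) (simp_all add: \<iota>_def vec_eq_iff)
  have \<iota>cont: "continuous_on S \<iota>" for S
    using linear_continuous_on[of \<iota>] \<iota>lin by (simp add: linear_conv_bounded_linear)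
  have \<iota>norm: "norm (\<iota> z) \<le> d * norm z" for z
  proof -
    have "norm (\<iota> z) \<le> sum (\<lambda>i. \<bar>\<iota> z $ i\<bar>) UNIV" by (rule norm_le_l1_cart)
    also have "\<dots> \<le> of_nat (card (UNIV :: 'n set)) * norm z"
    proof (rule sum_bounded_above)
      fix i
      show "\<bar>\<iota> z $ i\<bar> \<le> norm z"
        unfolding \<iota>_def using component_le_norm_cart[of z] by simp
    qed
    finally show ?thesis unfolding d_def by simp
  qed
  define E where "E = {y. \<iota> y \<in> F}"
  define G where "G = g0 \<circ> \<iota>"
  have GE: "G ` E \<subseteq> mbdry M A"
  proof
    fix p assume "p \<in> G ` E"
    then obtain y where y: "\<iota> y \<in> F" "p = g0 (\<iota> y)" unfolding E_def G_def by auto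
    then show "p \<in> mbdry M A" using zero[of "\<iota> y"] Fsub \<iota>k by blast
  qed
  have brGE: "bdry_rel M A W \<subseteq> G ` E"
  proof
    fix p assume "p \<in> bdry_rel M A W"
    then obtain x where x: "x \<in> F" "p = g0 x" using brF by blast
    then have "x $ k0 = 0" unfolding F_def by simp
    then have xe: "x = \<iota> (\<chi> j. x $ \<beta> j)" by (rule \<iota>surj)
    then have "(\<chi> j. x $ \<beta> j) \<in> E" unfolding E_def using x(1) by simp
    moreover have "p = G (\<chi> j. x $ \<beta> j)" unfolding G_def using x(2) xe by simp
    ultimately show "p \<in> G ` E" by blast
  qed
  have negE: "negligible E"
  proof -
    have hyp: "negligible {y::real^'k. y $ j = t}" for j t
    proof -
      have "{y::real^'k. y $ j = t} = {y. axis j 1 \<bullet> y = t}" by (simp add: inner_axis')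
      then show ?thesis using negligible_hyperplane[of "axis j (1::real)" t] by (simp add: axis_eq_0_iff)
    qed
    have "E \<subseteq> \<Union>((\<lambda>(j, t). {y::real^'k. y $ j = t}) ` (UNIV \<times> {c, -c}))"
    proof
      fix y assume "y \<in> E"
      then have yF: "\<iota> y \<in> F" unfolding E_def by simp
      then have "\<iota> y \<in> Qc" "\<iota> y \<notin> Q" unfolding F_def by auto
      then obtain i where i: "\<bar>\<iota> y $ i\<bar> = c" unfolding memQc memQ by (meson not_less order.antisym)
      have "i \<noteq> k0" using i \<iota>k cpos by auto
      then have "y $ \<beta>i i = \<iota> y $ i" using \<iota>\<beta>[of y "\<beta>i i"] \<beta>\<beta>i by simp
      then have "y $ \<beta>i i \<in> {c, -c}" using i by auto
      then show "y \<in> \<Union>((\<lambda>(j, t). {y::real^'k. y $ j = t}) ` (UNIV \<times> {c, -c}))" by blast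
    qed
    moreover have "negligible (\<Union>((\<lambda>(j, t). {y::real^'k. y $ j = t}) ` (UNIV \<times> {c, -c})))"
      by (rule negligible_Union) (auto simp: hyp)
    ultimately show ?thesis using negligible_subset by blast
  qed
  have vol2: "riem_vol TYPE('k) (mbdry M A) (bdry_rel M A W) = 0"
  proof (rule riem_vol_zero)
    fix U and g :: "real^'k \<Rightarrow> 'a" assume chg: "chart1 (mbdry M A) U g"
    have "negligible {u\<in>U. g u \<in> G ` E}"
    proof (rule chart_neg[OF chg negE GE, of "L * d" "\<iota> -` U0"])
      show "open (\<iota> -` U0)"
        using continuous_on_open_vimage[OF open_UNIV, THEN iffD1, OF \<iota>cont, rule_format, OF oU0] by simp
      show "E \<subseteq> \<iota> -` U0" unfolding E_def using Fsub by blast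
      have "continuous_on (\<iota> -` U0) (g0 \<circ> \<iota>)"
        by (rule continuous_on_compose[OF \<iota>cont continuous_on_subset[OF cg0]]) blast
      then show "continuous_on (\<iota> -` U0) G" unfolding G_def .
      fix a b assume ab: "a \<in> E" "b \<in> E"
      then have "\<iota> a \<in> Qc" "\<iota> b \<in> Qc" unfolding E_def using Fsub by blast+
      then have "norm (g0 (\<iota> a) - g0 (\<iota> b)) \<le> L * norm (\<iota> a - \<iota> b)" by (rule L(5))
      also have "\<iota> a - \<iota> b = \<iota> (a - b)" using linear_diff[OF \<iota>lin] by simp
      also have "L * norm (\<iota> (a - b)) \<le> L * (d * norm (a - b))" using \<iota>norm L(1) by (intro mult_left_mono) auto
      finally show "norm (G a - G b) \<le> L * d * norm (a - b)" unfolding G_def by (simp add: mult.assoc)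
    qed
    moreover have "{u\<in>U. g u \<in> bdry_rel M A W} \<subseteq> {u\<in>U. g u \<in> G ` E}" using brGE by blast
    ultimately show "negligible {u\<in>U. g u \<in> bdry_rel M A W}" using negligible_subset by blast
  qed
  have Fpr: "x $ k0 = 0 \<and> (\<forall>i. \<bar>x $ i\<bar> \<le> c) \<and> (\<exists>i. \<bar>x $ i\<bar> = c)" if "x \<in> F" for x
  proof -
    have "x \<in> Qc" "x \<notin> Q" "x $ k0 = 0" using that unfolding F_def by auto
    then show ?thesis unfolding memQc memQ by (meson not_less order.antisym)
  qed
  have gd: "gdist M (g0 a) (g0 b) \<le> ereal (L * norm (b - a))" if "a \<in> F" "b \<in> F" for a b
    by (rule gdist_chart[OF L(2) L(3) cQc(2) QcU0 L(4) gU0M]) (use that Fsub in blast)+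
  have dpos': "real d > 0" using dpos by simp
  define B :: real where "B = 2 * real d * (2 * c * L * real d + 2) ^ (CARD('n) - 2)"
  have evB: "eventually (\<lambda>r. ereal (r ^ (CARD('n) - 2)) * ereal_of_enat (covnum M (bdry_rel M A W) r) \<le> ereal B) (at_right 0)"
    unfolding eventually_at_right_field
  proof (intro exI[of _ 1] conjI allI impI)
    fix r :: real assume r0: "r > 0" and r1: "r < 1"
    have brM: "bdry_rel M A W \<subseteq> M" using brA bdM by (rule order_trans)
    from cover_lemma[OF cpos L(1) r0 Fpr brF brM gd]
    obtain X where X: "finite X" "X \<subseteq> bdry_rel M A W" "bdry_rel M A W \<subseteq> (\<Union>x\<in>X. gball M x r)"
      "real (card X) \<le> 2 * CARD('n) * (2 * c / (r / (L * CARD('n))) + 2) ^ (CARD('n) - 2)"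
      by blast
    have "enat (card X) \<in> {enat (card X) | X. finite X \<and> X \<subseteq> bdry_rel M A W \<and> bdry_rel M A W \<subseteq> (\<Union>x\<in>X. gball M x r)}"
      using X(1-3) by blast
    then have "covnum M (bdry_rel M A W) r \<le> enat (card X)"
      unfolding covnum_def by (rule Inf_lower)
    then have "ereal_of_enat (covnum M (bdry_rel M A W) r) \<le> ereal_of_enat (enat (card X))"
      by (simp only: ereal_of_enat_le_iff)
    then have "ereal_of_enat (covnum M (bdry_rel M A W) r) \<le> ereal (real (card X))" by simp
    then have "ereal (r ^ (CARD('n) - 2)) * ereal_of_enat (covnum M (bdry_rel M A W) r)
        \<le> ereal (r ^ (CARD('n) - 2)) * ereal (real (card X))"
      by (rule ereal_mult_left_mono) (use r0 in simp)
    also have "\<dots> = ereal (r ^ (CARD('n) - 2) * real (card X))" by simp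
    also have "r ^ (CARD('n) - 2) * real (card X) \<le> B"
      unfolding B_def by (rule cover_arith[OF r0 r1 cpos L(1) dpos']) (use X(4) d_def in simp)
    finally show "ereal (r ^ (CARD('n) - 2)) * ereal_of_enat (covnum M (bdry_rel M A W) r) \<le> ereal B"
      by simp
  qed simp
  have lim: "Limsup (at_right 0) (\<lambda>r. ereal (r ^ (CARD('n) - 2)) * ereal_of_enat (covnum M (bdry_rel M A W) r)) < \<infinity>"
    using Limsup_bounded[OF evB] by (rule le_less_trans) simp
  show ?thesis
    by (rule exI[of _ W]) (use oW x0W clWV vol1 vol2 lim in blast)

qed


end
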